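(* Let $E$ be a complex Banach lattice and let $A: E \supseteq D(A) \to E$ be a densely defined, closed, real linear operator. Let $u \in E_+$ and let $\varphi \in E'_+$ be strictly positive. Assume: (Domination) there are integers $m_1, m_2 \ge 0$ such that $D(A^{m_1}) \subseteq E_u$ and $D((A')^{m_2}) \subseteq (E')_\varphi$; (Spectral) there is $\lambda_0 \in \mathbb{R}$ which is a geometrically simple eigenvalue of $A$ and an eigenvalue of $A'$, such that $\ker(\lambda_0 - A)$ is spanned by a vector $v$ with $v \succeq u$, and $\ker(\lambda_0 - A')$ contains an element $\psi$ with $\psi \succeq \varphi$. Let $\mu_0$ be a real number in $\rho(A)$. (a) If $R(\mu_0,A)\succeq -u\otimes\varphi$, then $R(\mu_0,A)^n\succeq -u\otimes\varphi$ for all $n\in\mathbb{N}$. (b) If $R(\mu_0,A)\preceq u\otimes\varphi$, then $(-1)^{n-1}R(\mu_0,A)^n\preceq u\otimes\varphi$ for all $n\in\mathbb{N}$.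
   Context: $E_{\mathbb{R}}$ denotes the real part of $E$. A linear operator $A$ is real if $D(A) = (D(A)\cap E_{\mathbb{R}}) + i(D(A)\cap E_{\mathbb{R}})$ and $A$ maps $D(A)\cap E_{\mathbb{R}}$ into $E_{\mathbb{R}}$. $R(\mu,A) = (\mu - A)^{-1}$. For real vectors, $v \succeq u$ means $v \ge cu$ for some $c>0$. For bounded real operators, $T\succeq S$ (equivalently $S\preceq T$) means $T - cS$ is positive for some $c>0$. $u\otimes\varphi$ is $f\mapsto\langle\varphi,f\rangle u$. $\varphi$ strictly positive: $\langle\varphi,f\rangle>0$ for all $0\ne f\in E_+$. $E_u = \{x : |x|\le cu \text{ for some } c\ge0\}$; $(E')_\varphi = \{x'\in E' : |x'|\le c\varphi \text{ for some } c\ge 0\}$. Geometrically simple: one-dimensional eigenspace. *)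

theory Defs
  imports "HOL-Analysis.Analysis"
begin

definition lat_abs :: "'a::{lattice, uminus} \<Rightarrow> 'a" where
  "lat_abs x = sup x (- x)"

class banach_lattice = banach + ordered_real_vector + lattice +
  assumes lattice_norm: "sup x (- x) \<le> sup y (- y) \<Longrightarrow> norm x \<le> norm y"

section \<open>The complexification E = E_R + i E_R, modelled as pairs (real part, imaginary part)\<close>

text \<open>The topology is the product topology of E_R x E_R, which is the topology of
  the complex Banach lattice norm (the two norms are equivalent).\<close>

definition cJ :: "'a::real_vector \<times> 'a \<Rightarrow> 'a \<times> 'a" where
  "cJ z = (- snd z, fst z)"   \<comment> \<open>multiplication by the imaginary unit\<close>

definition cscale :: "complex \<Rightarrow> 'a::real_vector \<times> 'a \<Rightarrow> 'a \<times> 'a" where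
  "cscale c z = Re c *\<^sub>R z + Im c *\<^sub>R cJ z"

definition creal :: "'a::real_vector \<Rightarrow> 'a \<times> 'a" where
  "creal x = (x, 0)"

definition Epos :: "('a::banach_lattice \<times> 'a) set" where
  "Epos = {creal x | x. 0 \<le> x}"

text \<open>Complex modulus |x + iy| = sup over t of (cos t x + sin t y); hence
  |z| <= w iff every element of that set is <= w.\<close>
definition cmod_le :: "'a::banach_lattice \<times> 'a \<Rightarrow> 'a \<Rightarrow> bool" where
  "cmod_le z w \<longleftrightarrow> (\<forall>t. cos t *\<^sub>R fst z + sin t *\<^sub>R snd z \<le> w)"

definition princ_ideal :: "'a::banach_lattice \<Rightarrow> ('a \<times> 'a) set" where
  "princ_ideal u = {z. \<exists>c\<ge>0. cmod_le z (c *\<^sub>R u)}"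

definition clinear_on :: "('a::real_vector \<times> 'a) set \<Rightarrow> ('a \<times> 'a \<Rightarrow> 'a \<times> 'a) \<Rightarrow> bool" where
  "clinear_on D A \<longleftrightarrow> subspace D \<and> (\<forall>z\<in>D. cJ z \<in> D) \<and>
     (\<forall>z\<in>D. \<forall>w\<in>D. A (z + w) = A z + A w) \<and>
     (\<forall>z\<in>D. \<forall>r::real. A (r *\<^sub>R z) = r *\<^sub>R A z) \<and>
     (\<forall>z\<in>D. A (cJ z) = cJ (A z))"

definition bounded_clinear :: "('a::real_normed_vector \<times> 'a \<Rightarrow> 'a \<times> 'a) \<Rightarrow> bool" where
  "bounded_clinear T \<longleftrightarrow> bounded_linear T \<and> (\<forall>z. T (cJ z) = cJ (T z))"

definition cdual :: "('a::real_normed_vector \<times> 'a \<Rightarrow> complex) set" where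
  "cdual = {f. bounded_linear f \<and> (\<forall>z. f (cJ z) = \<i> * f z)}"

definition closed_op :: "('a::real_normed_vector \<times> 'a) set \<Rightarrow> ('a \<times> 'a \<Rightarrow> 'a \<times> 'a) \<Rightarrow> bool" where
  "closed_op D A \<longleftrightarrow> closed {(z, A z) | z. z \<in> D}"

definition densely_defined :: "('a::real_normed_vector \<times> 'a) set \<Rightarrow> bool" where
  "densely_defined D \<longleftrightarrow> closure D = UNIV"

definition real_op :: "('a::real_vector \<times> 'a) set \<Rightarrow> ('a \<times> 'a \<Rightarrow> 'a \<times> 'a) \<Rightarrow> bool" where
  "real_op D A \<longleftrightarrow> D = {(x, y). creal x \<in> D \<and> creal y \<in> D} \<and>
     (\<forall>x. creal x \<in> D \<longrightarrow> snd (A (creal x)) = 0)"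

fun dom_pow :: "'b set \<Rightarrow> 'b set \<Rightarrow> ('b \<Rightarrow> 'b) \<Rightarrow> nat \<Rightarrow> 'b set" where
  "dom_pow X D A 0 = X"
| "dom_pow X D A (Suc m) = {z \<in> D. A z \<in> dom_pow X D A m}"

definition adj_dom :: "('a::real_normed_vector \<times> 'a) set \<Rightarrow> ('a \<times> 'a \<Rightarrow> 'a \<times> 'a)
    \<Rightarrow> ('a \<times> 'a \<Rightarrow> complex) set" where
  "adj_dom D A = {x' \<in> cdual. \<exists>y'\<in>cdual. \<forall>f\<in>D. x' (A f) = y' f}"

definition adj :: "('a::real_normed_vector \<times> 'a) set \<Rightarrow> ('a \<times> 'a \<Rightarrow> 'a \<times> 'a)
    \<Rightarrow> ('a \<times> 'a \<Rightarrow> complex) \<Rightarrow> ('a \<times> 'a \<Rightarrow> complex)" where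
  "adj D A x' = (THE y'. y' \<in> cdual \<and> (\<forall>f\<in>D. x' (A f) = y' f))"

definition dual_pos :: "('a::banach_lattice \<times> 'a \<Rightarrow> complex) \<Rightarrow> bool" where
  "dual_pos \<phi> \<longleftrightarrow> \<phi> \<in> cdual \<and> (\<forall>x\<ge>0. Im (\<phi> (creal x)) = 0 \<and> 0 \<le> Re (\<phi> (creal x)))"

definition strictly_pos :: "('a::banach_lattice \<times> 'a \<Rightarrow> complex) \<Rightarrow> bool" where
  "strictly_pos \<phi> \<longleftrightarrow> (\<forall>x. 0 \<le> x \<and> x \<noteq> 0 \<longrightarrow> Im (\<phi> (creal x)) = 0 \<and> 0 < Re (\<phi> (creal x)))"

text \<open>Principal ideal (E')_phi = {x' in E'. |x'| <= c phi for some c >= 0}, where the modulus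
  in E' is |x'| = sup over t of (cos t Re x' + sin t Im x') in the dual order.\<close>
definition dual_princ_ideal :: "('a::banach_lattice \<times> 'a \<Rightarrow> complex) \<Rightarrow> ('a \<times> 'a \<Rightarrow> complex) set" where
  "dual_princ_ideal \<phi> = {x' \<in> cdual. \<exists>c\<ge>0. \<forall>t. \<forall>f\<ge>0.
      cos t * Re (x' (creal f)) + sin t * Im (x' (creal f)) \<le> c * Re (\<phi> (creal f))}"

definition vec_succeq :: "'a::banach_lattice \<times> 'a \<Rightarrow> 'a \<Rightarrow> bool" where
  "vec_succeq v u \<longleftrightarrow> snd v = 0 \<and> (\<exists>c>0. c *\<^sub>R u \<le> fst v)"

definition fun_succeq :: "('a::banach_lattice \<times> 'a \<Rightarrow> complex) \<Rightarrow> ('a \<times> 'a \<Rightarrow> complex) \<Rightarrow> bool" where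
  "fun_succeq \<psi> \<phi> \<longleftrightarrow> (\<forall>x. Im (\<psi> (creal x)) = 0) \<and>
     (\<exists>c>0. dual_pos (\<lambda>z. \<psi> z - of_real c * \<phi> z))"

definition pos_op :: "('a::banach_lattice \<times> 'a \<Rightarrow> 'a \<times> 'a) \<Rightarrow> bool" where
  "pos_op T \<longleftrightarrow> (\<forall>f\<in>Epos. T f \<in> Epos)"

definition op_succeq :: "('a::banach_lattice \<times> 'a \<Rightarrow> 'a \<times> 'a) \<Rightarrow> ('a \<times> 'a \<Rightarrow> 'a \<times> 'a) \<Rightarrow> bool" where
  "op_succeq T S \<longleftrightarrow> (\<exists>c>0. pos_op (\<lambda>z. T z - c *\<^sub>R S z))"

definition rank_one :: "'a::banach_lattice \<Rightarrow> ('a \<times> 'a \<Rightarrow> complex) \<Rightarrow> ('a \<times> 'a \<Rightarrow> 'a \<times> 'a)" where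
  "rank_one u \<phi> = (\<lambda>f. cscale (\<phi> f) (creal u))"

definition in_resolvent_set :: "complex \<Rightarrow> ('a::real_normed_vector \<times> 'a) set \<Rightarrow> ('a \<times> 'a \<Rightarrow> 'a \<times> 'a) \<Rightarrow> bool" where
  "in_resolvent_set \<mu> D A \<longleftrightarrow> bij_betw (\<lambda>z. cscale \<mu> z - A z) D UNIV \<and>
     bounded_clinear (inv_into D (\<lambda>z. cscale \<mu> z - A z))"

definition resolvent :: "complex \<Rightarrow> ('a::real_normed_vector \<times> 'a) set \<Rightarrow> ('a \<times> 'a \<Rightarrow> 'a \<times> 'a)
    \<Rightarrow> ('a \<times> 'a \<Rightarrow> 'a \<times> 'a)" where
  "resolvent \<mu> D A = inv_into D (\<lambda>z. cscale \<mu> z - A z)"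

end

theory Submission
  imports Defs
begin


lemma Epos_iff: "z \<in> Epos \<longleftrightarrow> snd z = 0 \<and> 0 \<le> fst z"
  unfolding Epos_def creal_def by (cases z) auto

lemma creal_simps[simp]: "fst (creal x) = x" "snd (creal x) = 0"
  by (simp_all add: creal_def)

lemma creal_ops: "creal (x + y) = creal x + creal y" "creal (x - y) = creal x - creal y"
  "creal (a *\<^sub>R x) = a *\<^sub>R creal x" "creal 0 = 0"
  by (simp_all add: creal_def zero_prod_def)

lemma linear_funpow: assumes RL: "linear (R::'a::real_vector \<Rightarrow> 'a)" shows "linear (R ^^ n)"
proof (induct n)
  case 0
  have "R^^0 = id" by (simp add: fun_eq_iff)
  then show ?case using linear_id by metis
next
  case (Suc n)
  have "R^^Suc n = R \<circ> R^^n" by simp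
  then show ?case using linear_compose[OF Suc RL] by metis
qed

lemma neg_scale_mono: "(a::real) \<le> b \<Longrightarrow> 0 \<le> (u::'a::ordered_real_vector) \<Longrightarrow> - (b *\<^sub>R u) \<le> - (a *\<^sub>R u)"
  using scaleR_right_mono by auto

lemma core:
  fixes R :: "'a::banach_lattice \<times> 'a \<Rightarrow> 'a \<times> 'a" and \<phi> \<psi> :: "'a \<times> 'a \<Rightarrow> complex"
  assumes linR: "linear R" and phi: "dual_pos \<phi>" and psil: "linear \<psi>"
    and psi_lo: "\<And>x. 0 \<le> x \<Longrightarrow> cp * Re (\<phi> (creal x)) \<le> Re (\<psi> (creal x))"
    and psi_hi: "\<And>x. 0 \<le> x \<Longrightarrow> Re (\<psi> (creal x)) \<le> C2 * Re (\<phi> (creal x))"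
    and cp: "cp > 0" and C2: "C2 \<ge> 0"
    and psiR: "\<And>z. \<psi> (R z) = of_real \<alpha> * \<psi> z"
    and Rw: "R (creal w) = \<alpha> *\<^sub>R creal w" and c0: "c0 > 0" and wlo: "c0 *\<^sub>R u \<le> w"
    and whi: "w \<le> C1 *\<^sub>R u" and C1: "C1 \<ge> 0"
    and u: "0 \<le> u" and c: "c \<ge> 0"
    and T: "pos_op (\<lambda>z. R z - c *\<^sub>R (- rank_one u \<phi> z))"
  shows "\<exists>C>0. pos_op (\<lambda>z. (R^^n) z + C *\<^sub>R rank_one u \<phi> z)"
proof -
  define p where "p x = Re (\<phi> (creal x))" for x
  define q where "q x = Re (\<psi> (creal x))" for x
  have phil: "linear \<phi>" using phi unfolding dual_pos_def cdual_def
    by (auto intro: bounded_linear.linear)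
  have phire: "\<phi> (creal x) = of_real (p x)" if "0 \<le> x" for x
    using phi that unfolding dual_pos_def p_def by (simp add: complex_eq_iff)
  have p_pos: "0 \<le> p x" if "0 \<le> x" for x
    using phi that unfolding dual_pos_def p_def by simp
  have p_add: "p (x + y) = p x + p y" for x y
    unfolding p_def creal_ops linear_add[OF phil] by simp
  have p_diff: "p (x - y) = p x - p y" for x y
    unfolding p_def creal_ops linear_diff[OF phil] by simp
  have p_scale: "p (a *\<^sub>R x) = a * p x" for a x
    unfolding p_def creal_ops linear_scale[OF phil] by simp
  have q_pos: "0 \<le> q x" if "0 \<le> x" for x
    using psi_lo[OF that] p_pos[OF that] cp unfolding q_def p_def
    by (smt (verit) mult_nonneg_nonneg)
  have rk: "rank_one u \<phi> (creal x) = creal (p x *\<^sub>R u)" if "0 \<le> x" for x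
    unfolding rank_one_def cscale_def creal_def using phire[OF that]
    by (simp add: creal_def)
  have Rpos: "snd (R (creal x)) = 0 \<and> 0 \<le> fst (R (creal x)) + (c * p x) *\<^sub>R u" if "0 \<le> x" for x
  proof -
    have "creal x \<in> Epos" using that by (simp add: Epos_iff)
    then have "R (creal x) - c *\<^sub>R (- rank_one u \<phi> (creal x)) \<in> Epos"
      using T unfolding pos_op_def by blast
    then show ?thesis using rk[OF that] by (simp add: Epos_iff creal_def)
  qed
  have Rnl: "linear (R^^n)" for n using linear_funpow[OF linR] .
  have Rnw: "(R^^n) (creal w) = (\<alpha>^n) *\<^sub>R creal w" for n
  proof (induct n)
    case 0 then show ?case by simp
  next
    case (Suc n) then show ?case using Rw by (simp add: linear_scale[OF linR])
  qed
  have main: "\<exists>C\<ge>0. \<forall>x\<ge>0. snd ((R^^n) (creal x)) = 0 \<and> - ((C * p x) *\<^sub>R u) \<le> fst ((R^^n) (creal x))"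
  proof (induction n)
    case 0 then show ?case by (intro exI[of _ 0]) simp
  next
    case (Suc n)
    then obtain C where C: "C \<ge> 0" and H: "\<And>x. 0 \<le> x \<Longrightarrow> snd ((R^^n) (creal x)) = 0 \<and> - ((C * p x) *\<^sub>R u) \<le> fst ((R^^n) (creal x))"
      by blast
    define d where "d = (1/c0) *\<^sub>R w - u"
    have "(1/c0) *\<^sub>R (c0 *\<^sub>R u) \<le> (1/c0) *\<^sub>R w"
      using wlo c0 by (intro scaleR_left_mono) auto
    then have d0: "0 \<le> d" using c0 by (simp add: d_def)
    have w0: "0 \<le> w" using wlo u c0
      by (meson order_trans scaleR_nonneg_nonneg less_imp_le)
    have u_eq: "creal u = (1/c0) *\<^sub>R creal w - creal d"
      by (simp add: d_def creal_def)
    define K where "K = \<bar>\<alpha>\<bar>^n * C1 / c0 + C * p d"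
    have K0: "K \<ge> 0" unfolding K_def using C C1 c0 p_pos[OF d0] by simp
    have Ku: "fst ((R^^n) (creal u)) \<le> K *\<^sub>R u"
    proof -
      have e: "fst ((R^^n) (creal u)) = (1/c0) *\<^sub>R ((\<alpha>^n) *\<^sub>R w) - fst ((R^^n) (creal d))"
        unfolding u_eq linear_diff[OF Rnl] linear_scale[OF Rnl] Rnw by simp
      have "(\<alpha>^n) *\<^sub>R w \<le> (\<bar>\<alpha>\<bar>^n) *\<^sub>R w"
        using w0 by (intro scaleR_right_mono) (simp add: power_abs[symmetric])
      also have "\<dots> \<le> (\<bar>\<alpha>\<bar>^n) *\<^sub>R (C1 *\<^sub>R u)"
        using whi by (intro scaleR_left_mono) auto
      finally have "(1/c0) *\<^sub>R ((\<alpha>^n) *\<^sub>R w) \<le> (1/c0) *\<^sub>R ((\<bar>\<alpha>\<bar>^n) *\<^sub>R (C1 *\<^sub>R u))"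
        using c0 by (intro scaleR_left_mono) auto
      moreover have "- fst ((R^^n) (creal d)) \<le> (C * p d) *\<^sub>R u"
        using H[OF d0] by (metis neg_le_iff_le minus_minus)
      ultimately have "fst ((R^^n) (creal u)) \<le> (1/c0) *\<^sub>R ((\<bar>\<alpha>\<bar>^n) *\<^sub>R (C1 *\<^sub>R u)) + (C * p d) *\<^sub>R u"
        unfolding e by (metis add_mono diff_conv_add_uminus)
      also have "\<dots> = K *\<^sub>R u" unfolding K_def by (simp add: scaleR_add_left)
      finally show ?thesis .
    qed
    define Cf where "Cf = (\<bar>\<alpha>\<bar> * C2 + c * q u) / cp"
    show ?case
    proof (intro exI[of _ "C * Cf + c * K"] conjI allI impI)
      show "0 \<le> C * Cf + c * K" unfolding Cf_def using C C2 c cp K0 q_pos[OF u] by simp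
      fix x :: 'a assume x: "0 \<le> x"
      define y where "y = fst (R (creal x)) + (c * p x) *\<^sub>R u"
      have y0: "0 \<le> y" using Rpos[OF x] by (simp add: y_def)
      have Rx: "R (creal x) = creal y - (c * p x) *\<^sub>R creal u"
        using Rpos[OF x] by (simp add: y_def creal_def prod_eq_iff)
      have cy: "creal y = R (creal x) + (c * p x) *\<^sub>R creal u" using Rx by simp
      have qy: "q y = \<alpha> * q x + c * p x * q u"
        unfolding q_def cy linear_add[OF psil] linear_scale[OF psil] psiR by simp
      have "\<alpha> * q x \<le> \<bar>\<alpha>\<bar> * q x" using q_pos[OF x] by (simp add: mult_right_mono)
      also have "\<dots> \<le> \<bar>\<alpha>\<bar> * (C2 * p x)" using psi_hi[OF x] unfolding q_def p_def
        by (simp add: mult_left_mono)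
      finally have "q y \<le> (\<bar>\<alpha>\<bar> * C2 + c * q u) * p x" unfolding qy by (simp add: algebra_simps)
      moreover have "cp * p y \<le> q y" using psi_lo[OF y0] unfolding p_def q_def .
      ultimately have py: "p y \<le> Cf * p x" unfolding Cf_def using cp
        by (simp add: field_simps)
      have S: "(R^^Suc n) (creal x) = (R^^n) (creal y) - (c * p x) *\<^sub>R (R^^n) (creal u)"
      proof -
        have "(R^^Suc n) (creal x) = (R^^n) (R (creal x))" by (simp only: funpow_Suc_right o_apply)
        then show ?thesis by (simp add: Rx linear_diff[OF Rnl] linear_scale[OF Rnl])
      qed
      show "snd ((R^^Suc n) (creal x)) = 0" unfolding S using H[OF y0] H[OF u] by simp
      have a1: "- (((C * Cf) * p x) *\<^sub>R u) \<le> - ((C * p y) *\<^sub>R u)"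
        using py C u by (intro neg_scale_mono) (auto simp: mult.assoc intro: mult_left_mono)
      have a2: "- ((C * p y) *\<^sub>R u) \<le> fst ((R^^n) (creal y))" using H[OF y0] by simp
      have a3: "- (((c * K) * p x) *\<^sub>R u) \<le> - ((c * p x) *\<^sub>R fst ((R^^n) (creal u)))"
      proof -
        have "(c * p x) *\<^sub>R fst ((R^^n) (creal u)) \<le> (c * p x) *\<^sub>R (K *\<^sub>R u)"
          using Ku c p_pos[OF x] by (intro scaleR_left_mono) auto
        then show ?thesis by (simp add: mult.commute mult.left_commute)
      qed
      have "- (((C * Cf + c * K) * p x) *\<^sub>R u) = - (((C * Cf) * p x) *\<^sub>R u) + - (((c * K) * p x) *\<^sub>R u)"
        by (simp add: algebra_simps)
      also have "\<dots> \<le> fst ((R^^n) (creal y)) + - ((c * p x) *\<^sub>R fst ((R^^n) (creal u)))"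
        using order_trans[OF a1 a2] a3 by (intro add_mono)
      also have "\<dots> = fst ((R^^Suc n) (creal x))" unfolding S by simp
      finally show "- (((C * Cf + c * K) * p x) *\<^sub>R u) \<le> fst ((R^^Suc n) (creal x))" .
    qed
  qed
  then obtain C where C: "C \<ge> 0" and H: "\<And>x. 0 \<le> x \<Longrightarrow> snd ((R^^n) (creal x)) = 0 \<and> - ((C * p x) *\<^sub>R u) \<le> fst ((R^^n) (creal x))"
    by blast
  show ?thesis
  proof (intro exI[of _ "C + 1"] conjI)
    show "C + 1 > 0" using C by simp
    show "pos_op (\<lambda>z. (R^^n) z + (C + 1) *\<^sub>R rank_one u \<phi> z)"
      unfolding pos_op_def
    proof
      fix f :: "'a \<times> 'a" assume "f \<in> Epos"
      then obtain x :: 'a where x: "0 \<le> x" "f = creal x" unfolding Epos_def by blast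
      have "0 \<le> (p x) *\<^sub>R u" using p_pos[OF x(1)] u by (rule scaleR_nonneg_nonneg)
      also have "\<dots> = - ((C * p x) *\<^sub>R u) + ((C + 1) * p x) *\<^sub>R u" by (simp add: algebra_simps)
      also have "\<dots> \<le> fst ((R^^n) (creal x)) + ((C + 1) * p x) *\<^sub>R u"
        using H[OF x(1)] by (intro add_right_mono) auto
      finally show "(R^^n) f + (C + 1) *\<^sub>R rank_one u \<phi> f \<in> Epos"
        using H[OF x(1)] rk[OF x(1)] x(2) by (simp add: Epos_iff creal_def)
    qed
  qed
qed


lemma cscale_of_real[simp]: "cscale (of_real r) z = r *\<^sub>R z"
  by (simp add: cscale_def)

lemma cscale_one[simp]: "cscale 1 z = z"
  by (simp add: cscale_def)

lemma pos_op_scale: "pos_op F \<Longrightarrow> 0 \<le> a \<Longrightarrow> pos_op (\<lambda>z. a *\<^sub>R F z)"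
  unfolding pos_op_def Epos_iff by (simp add: scaleR_nonneg_nonneg)

lemma cdual_unique:
  assumes "y1 \<in> cdual" "y2 \<in> cdual" "\<forall>f\<in>D. y1 f = y2 f" "densely_defined D"
  shows "y1 = y2"
proof -
  have c1: "continuous_on UNIV y1" "continuous_on UNIV y2" using assms(1,2) unfolding cdual_def
    by (auto intro: linear_continuous_on)
  have "closed {z. y1 z = y2 z}" using c1 by (intro closed_Collect_eq) auto
  moreover have "D \<subseteq> {z. y1 z = y2 z}" using assms(3) by auto
  ultimately have "closure D \<subseteq> {z. y1 z = y2 z}" by (rule closure_minimal[rotated])
  then show ?thesis using assms(4) unfolding densely_defined_def by auto
qed

lemma adj_eq:
  assumes "y' \<in> cdual" "\<forall>f\<in>D. x' (A f) = y' f" "densely_defined D"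
  shows "adj D A x' = y'"
  unfolding adj_def
proof (rule the_equality)
  show "y' \<in> cdual \<and> (\<forall>f\<in>D. x' (A f) = y' f)" using assms by auto
  fix y assume "y \<in> cdual \<and> (\<forall>f\<in>D. x' (A f) = y f)"
  then show "y = y'" using assms by (intro cdual_unique[of y y' D]) auto
qed

lemma cdual_mult: "\<psi> \<in> cdual \<Longrightarrow> (\<lambda>z. a * \<psi> z) \<in> cdual"
  unfolding cdual_def
  by (auto intro: bounded_linear_compose[OF bounded_linear_mult_right])


theorem proposition4p4:
  fixes D :: "('a::banach_lattice \<times> 'a) set"
    and A :: "'a \<times> 'a \<Rightarrow> 'a \<times> 'a"
    and u :: 'a
    and \<phi> :: "'a \<times> 'a \<Rightarrow> complex"
    and m1 m2 :: nat
    and lambda0 mu0 :: real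
  assumes lin: "clinear_on D A"
    and dense: "densely_defined D"
    and closed: "closed_op D A"
    and real: "real_op D A"
    and u_pos: "0 \<le> u"
    and phi_pos: "dual_pos \<phi>"
    and phi_strict: "strictly_pos \<phi>"
    and dom1: "dom_pow UNIV D A m1 \<subseteq> princ_ideal u"
    and dom2: "dom_pow cdual (adj_dom D A) (adj D A) m2 \<subseteq> dual_princ_ideal \<phi>"
    and eig_A: "\<exists>v. v \<in> D \<and> v \<noteq> 0 \<and> vec_succeq v u \<and>
                   {z \<in> D. A z = lambda0 *\<^sub>R z} = {cscale c v | c. True}"
    and eig_A': "\<exists>\<psi>'. \<psi>' \<in> adj_dom D A \<and> \<psi>' \<noteq> (\<lambda>_. 0) \<and> adj D A \<psi>' = (\<lambda>z. of_real lambda0 * \<psi>' z)"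
    and eig_psi: "\<exists>\<psi>. \<psi> \<in> adj_dom D A \<and> adj D A \<psi> = (\<lambda>z. of_real lambda0 * \<psi> z) \<and> fun_succeq \<psi> \<phi>"
    and mu: "in_resolvent_set (of_real mu0) D A"
  shows "(op_succeq (resolvent (of_real mu0) D A) (\<lambda>z. - rank_one u \<phi> z) \<longrightarrow>
            (\<forall>n\<ge>1. op_succeq (resolvent (of_real mu0) D A ^^ n) (\<lambda>z. - rank_one u \<phi> z)))
       \<and> (op_succeq (rank_one u \<phi>) (resolvent (of_real mu0) D A) \<longrightarrow>
            (\<forall>n\<ge>1. op_succeq (rank_one u \<phi>)
                      (\<lambda>z. ((-1) ^ (n - 1)) *\<^sub>R (resolvent (of_real mu0) D A ^^ n) z)))"
  proof -
  define K where "K = rank_one u \<phi>"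
  define R where "R = resolvent (of_real mu0) D A"
  define L where "L z = mu0 *\<^sub>R z - A z" for z
  have Ldef: "(\<lambda>z. cscale (of_real mu0) z - A z) = L" by (simp add: L_def fun_eq_iff)
  have bij: "bij_betw L D UNIV" and bcl: "bounded_clinear R"
    using mu unfolding in_resolvent_set_def R_def resolvent_def Ldef by auto
  have Rdef: "R = inv_into D L" unfolding R_def resolvent_def Ldef ..
  have linR: "linear R" using bcl unfolding bounded_clinear_def by (auto intro: bounded_linear.linear)
  have RD: "R z \<in> D" for z using bij unfolding Rdef bij_betw_def by (auto intro: inv_into_into)
  have LR: "L (R z) = z" for z using bij unfolding Rdef bij_betw_def by (auto intro: f_inv_into_f)
  have RL: "z \<in> D \<Longrightarrow> R (L z) = z" for z using bij unfolding Rdef bij_betw_def by (auto intro: inv_into_f_f)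
  have subD: "subspace D" and Ascale: "\<And>z r. z \<in> D \<Longrightarrow> A (r *\<^sub>R z) = r *\<^sub>R A z"
    using lin unfolding clinear_on_def by auto
  obtain v where v: "v \<in> D" "v \<noteq> 0" "vec_succeq v u" and eigs: "{z \<in> D. A z = lambda0 *\<^sub>R z} = {cscale c v | c. True}"
    using eig_A by blast
  have "v \<in> {cscale c v | c. True}" by (intro CollectI exI[of _ 1]) simp
  then have Av: "A v = lambda0 *\<^sub>R v" using eigs by blast
  have Lv: "L v = (mu0 - lambda0) *\<^sub>R v" by (simp add: L_def Av scaleR_diff_left)
  have ne: "mu0 \<noteq> lambda0"
  proof
    assume "mu0 = lambda0"
    then have "R (L v) = R 0" using Lv by simp
    then show False using RL[OF v(1)] v(2) linear_0[OF linR] by simp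
  qed
  define \<alpha> where "\<alpha> = 1 / (mu0 - lambda0)"
  have Rv: "R v = \<alpha> *\<^sub>R v"
  proof -
    have "v = (mu0 - lambda0) *\<^sub>R R v" using RL[OF v(1)] unfolding Lv linear_scale[OF linR] by simp
    then have "\<alpha> *\<^sub>R v = \<alpha> *\<^sub>R ((mu0 - lambda0) *\<^sub>R R v)" by simp
    then show ?thesis unfolding \<alpha>_def using ne by simp
  qed
  obtain c0 where c0: "c0 > 0" "c0 *\<^sub>R u \<le> fst v" and sv: "snd v = 0"
    using v(3) unfolding vec_succeq_def by auto
  have vcr: "v = creal (fst v)" using sv by (simp add: creal_def prod_eq_iff)
  have Rv': "R (creal (fst v)) = \<alpha> *\<^sub>R creal (fst v)"
    using Rv vcr by metis
  have vdom: "\<forall>a. a *\<^sub>R v \<in> dom_pow UNIV D A m" for m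
  proof (induct m)
    case 0 then show ?case by simp
  next
    case (Suc m)
    show ?case
    proof
      fix a
      have "a *\<^sub>R v \<in> D" using subD v(1) by (rule subspace_scale)
      moreover have "A (a *\<^sub>R v) = (a * lambda0) *\<^sub>R v" using Ascale[OF v(1)] Av by simp
      ultimately show "a *\<^sub>R v \<in> dom_pow UNIV D A (Suc m)" using Suc by simp
    qed
  qed
  have "1 *\<^sub>R v \<in> dom_pow UNIV D A m1" using vdom by blast
  then have "v \<in> princ_ideal u" using dom1 by auto
  then obtain C1 where C1a: "C1 \<ge> 0" and "cmod_le v (C1 *\<^sub>R u)"
    unfolding princ_ideal_def by auto
  then have "cos 0 *\<^sub>R fst v + sin 0 *\<^sub>R snd v \<le> C1 *\<^sub>R u" unfolding cmod_le_def by blast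
  then have C1: "C1 \<ge> 0" "fst v \<le> C1 *\<^sub>R u" using C1a by simp_all
  obtain \<psi> where psi: "\<psi> \<in> adj_dom D A" "adj D A \<psi> = (\<lambda>z. of_real lambda0 * \<psi> z)" "fun_succeq \<psi> \<phi>"
    using eig_psi by blast
  have psid: "\<psi> \<in> cdual" using psi(1) unfolding adj_dom_def by auto
  then have psil: "linear \<psi>" unfolding cdual_def by (auto intro: bounded_linear.linear)
  obtain y' where y': "y' \<in> cdual" "\<forall>f\<in>D. \<psi> (A f) = y' f" using psi(1) unfolding adj_dom_def by auto
  have "adj D A \<psi> = y'" by (rule adj_eq[where x'="\<psi>" and A=A and D=D, OF y'(1) y'(2) dense])
  then have psiA: "\<And>f. f \<in> D \<Longrightarrow> \<psi> (A f) = of_real lambda0 * \<psi> f" using y'(2) psi(2) by auto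
  have psiR: "\<psi> (R z) = of_real \<alpha> * \<psi> z" for z
  proof -
    have "\<psi> z = \<psi> (L (R z))" using LR by simp
    also have "\<dots> = of_real mu0 * \<psi> (R z) - of_real lambda0 * \<psi> (R z)"
      unfolding L_def linear_diff[OF psil] linear_scale[OF psil] psiA[OF RD] by (simp add: scaleR_conv_of_real)
    finally have "\<psi> z = (of_real mu0 - of_real lambda0) * \<psi> (R z)" by (simp add: algebra_simps)
    moreover have "(of_real mu0 - of_real lambda0 :: complex) \<noteq> 0" using ne by simp
    ultimately show ?thesis unfolding \<alpha>_def by (simp add: field_simps)
  qed
  obtain cp where cp: "cp > 0" "dual_pos (\<lambda>z. \<psi> z - of_real cp * \<phi> z)"
    using psi(3) unfolding fun_succeq_def by auto
  have psi_lo: "cp * Re (\<phi> (creal x)) \<le> Re (\<psi> (creal x))" if "0 \<le> x" for x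
    using cp(2) that unfolding dual_pos_def by auto
  have pdom: "\<forall>a. (\<lambda>z. a * \<psi> z) \<in> dom_pow cdual (adj_dom D A) (adj D A) m" for m
  proof (induct m)
    case 0 then show ?case using cdual_mult[OF psid] by simp
  next
    case (Suc m)
    show ?case
    proof
      fix a :: complex
      have yc: "(\<lambda>z. (a * of_real lambda0) * \<psi> z) \<in> cdual" by (rule cdual_mult[OF psid])
      have eq: "\<forall>f\<in>D. a * \<psi> (A f) = (a * of_real lambda0) * \<psi> f" using psiA by simp
      have "(\<lambda>z. a * \<psi> z) \<in> adj_dom D A" unfolding adj_dom_def
        using cdual_mult[OF psid, of a] yc eq by (intro CollectI conjI bexI[of _ "\<lambda>z. (a * of_real lambda0) * \<psi> z"]) auto
      moreover have "adj D A (\<lambda>z. a * \<psi> z) = (\<lambda>z. (a * of_real lambda0) * \<psi> z)"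
        by (rule adj_eq[where x'="\<lambda>z. a * \<psi> z" and A=A and D=D, OF yc _ dense]) (use eq in simp)
      ultimately show "(\<lambda>z. a * \<psi> z) \<in> dom_pow cdual (adj_dom D A) (adj D A) (Suc m)"
        using Suc by simp
    qed
  qed
  have "(\<lambda>z. 1 * \<psi> z) \<in> dom_pow cdual (adj_dom D A) (adj D A) m2" using pdom by blast
  then have "\<psi> \<in> dual_princ_ideal \<phi>" using dom2 by auto
  then obtain C2 where C2a: "C2 \<ge> 0" and C2b: "\<forall>t. \<forall>f\<ge>0. cos t * Re (\<psi> (creal f)) + sin t * Im (\<psi> (creal f)) \<le> C2 * Re (\<phi> (creal f))"
    unfolding dual_princ_ideal_def by auto
  have C2c: "Re (\<psi> (creal f)) \<le> C2 * Re (\<phi> (creal f))" if "0 \<le> f" for f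
  proof -
    have "cos 0 * Re (\<psi> (creal f)) + sin 0 * Im (\<psi> (creal f)) \<le> C2 * Re (\<phi> (creal f))"
      using C2b that by blast
    then show ?thesis by simp
  qed
  note C2 = C2a C2c
  show ?thesis
  proof (intro conjI impI allI)
    fix n :: nat assume "op_succeq (resolvent (of_real mu0) D A) (\<lambda>z. - rank_one u \<phi> z)" and n: "1 \<le> n"
    then obtain c where c: "c > 0" "pos_op (\<lambda>z. R z - c *\<^sub>R (- rank_one u \<phi> z))"
      unfolding op_succeq_def R_def by auto
    obtain C where "C > 0" "pos_op (\<lambda>z. (R^^n) z + C *\<^sub>R rank_one u \<phi> z)"
      using core[OF linR phi_pos psil psi_lo C2(2) cp(1) C2(1) psiR Rv' c0(1) c0(2) C1(2) C1(1) u_pos _ c(2)] c(1)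
      by auto
    then show "op_succeq (resolvent (of_real mu0) D A ^^ n) (\<lambda>z. - rank_one u \<phi> z)"
      unfolding op_succeq_def R_def by auto
  next
    fix n :: nat assume "op_succeq (rank_one u \<phi>) (resolvent (of_real mu0) D A)" and n: "1 \<le> n"
    then obtain c where c: "c > 0" "pos_op (\<lambda>z. rank_one u \<phi> z - c *\<^sub>R R z)"
      unfolding op_succeq_def R_def by auto
    define S where "S z = - R z" for z
    have linS: "linear S" unfolding S_def by (rule linear_compose_neg[OF linR])
    have Sv: "S (creal (fst v)) = (- \<alpha>) *\<^sub>R creal (fst v)" using Rv' unfolding S_def by simp
    have psiS: "\<psi> (S z) = of_real (- \<alpha>) * \<psi> z" for z
      unfolding S_def linear_neg[OF psil] psiR by simp
    have T: "pos_op (\<lambda>z. S z - (1/c) *\<^sub>R (- rank_one u \<phi> z))"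
    proof -
      have "pos_op (\<lambda>z. (1/c) *\<^sub>R (rank_one u \<phi> z - c *\<^sub>R R z))"
        using pos_op_scale[OF c(2)] c(1) by simp
      moreover have "(\<lambda>z. (1/c) *\<^sub>R (rank_one u \<phi> z - c *\<^sub>R R z)) = (\<lambda>z. S z - (1/c) *\<^sub>R (- rank_one u \<phi> z))"
        using c(1) by (simp add: S_def fun_eq_iff algebra_simps)
      ultimately show ?thesis by simp
    qed
    obtain C where C: "C > 0" "pos_op (\<lambda>z. (S^^n) z + C *\<^sub>R rank_one u \<phi> z)"
      using core[OF linS phi_pos psil psi_lo C2(2) cp(1) C2(1) psiS Sv c0(1) c0(2) C1(2) C1(1) u_pos _ T] c(1)
      by auto
    have Sn: "(S^^k) z = ((-1)^k) *\<^sub>R (R^^k) z" for k z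
    proof (induct k)
      case 0 then show ?case by simp
    next
      case (Suc k) then show ?case by (simp add: S_def linear_scale[OF linR])
    qed
    have "pos_op (\<lambda>z. (1/C) *\<^sub>R ((S^^n) z + C *\<^sub>R rank_one u \<phi> z))"
      using pos_op_scale[OF C(2)] C(1) by simp
    moreover have "(\<lambda>z. (1/C) *\<^sub>R ((S^^n) z + C *\<^sub>R rank_one u \<phi> z)) =
        (\<lambda>z. rank_one u \<phi> z - (1/C) *\<^sub>R ((-1) ^ (n - 1)) *\<^sub>R (R^^n) z)"
    proof -
      have pw: "((-1::real)^n) = - ((-1)^(n-1))" using n by (metis Suc_diff_1 less_le_trans zero_less_one mult_minus1 power_Suc)
      show ?thesis using C(1) by (simp add: Sn pw fun_eq_iff algebra_simps)
    qed
    ultimately show "op_succeq (rank_one u \<phi>) (\<lambda>z. ((-1) ^ (n - 1)) *\<^sub>R (resolvent (of_real mu0) D A ^^ n) z)"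
      unfolding op_succeq_def R_def using C(1) by (intro exI[of _ "1/C"]) auto
  qed
qed

end
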